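(* Let $\mathbb{H}^n$ be $\mathbb{R}^n$ or $\mathbb{C}^n$. The family of all $m$-element frames on $\mathbb{H}^n$ that are injective is open in the space of all $m$-element frames on $\mathbb{H}^n$, with respect to the distance $d$.
   Context: A family $\{x_k\}$ of vectors in a Hilbert space is called injective if whenever a self-adjoint operator $T$ satisfies $\langle Tx_k,x_k\rangle=0$ for all $k$, then $T=0$. For $m$-element frames $\mathcal{X}=\{x_k\}_{k=1}^m$ and $\mathcal{Y}=\{y_k\}_{k=1}^m$, the distance is $d(\mathcal{X},\mathcal{Y})^2=\sum_{k=1}^m\|x_k-y_k\|^2$. *)

theory Defs
  imports "HOL-Analysis.Analysis"
begin

text \<open>The scalar field H is R or C. Both are modelled inside complex:
  K = \<real> (real scalars) or K = UNIV (complex scalars).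
  Vectors of H^n are vectors in complex^'n with all coordinates in K.\<close>

definition hvec :: "complex set \<Rightarrow> (complex ^ 'n) set" where
  "hvec K = {x. \<forall>i. x $ i \<in> K}"

definition hinner :: "complex ^ 'n \<Rightarrow> complex ^ 'n \<Rightarrow> complex" where
  "hinner x y = (\<Sum>i\<in>UNIV. x $ i * cnj (y $ i))"

definition self_adjoint_op :: "complex set \<Rightarrow> complex ^ 'n ^ 'n \<Rightarrow> bool" where
  "self_adjoint_op K T \<longleftrightarrow> (\<forall>i j. T $ i $ j \<in> K \<and> T $ i $ j = cnj (T $ j $ i))"

text \<open>A family (x_k) indexed by the finite type 'm (so m = CARD('m)) is a frame
  for H^n if it consists of vectors of H^n and satisfies the frame inequalities.\<close>
definition is_frame :: "complex set \<Rightarrow> ('m::finite \<Rightarrow> complex ^ 'n) \<Rightarrow> bool" where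
  "is_frame K X \<longleftrightarrow> (\<forall>k. X k \<in> hvec K) \<and>
     (\<exists>A B. 0 < A \<and> A \<le> B \<and>
        (\<forall>x\<in>hvec K. A * (norm x)\<^sup>2 \<le> (\<Sum>k\<in>UNIV. (cmod (hinner x (X k)))\<^sup>2) \<and>
                     (\<Sum>k\<in>UNIV. (cmod (hinner x (X k)))\<^sup>2) \<le> B * (norm x)\<^sup>2))"

definition injective_family :: "complex set \<Rightarrow> ('m::finite \<Rightarrow> complex ^ 'n) \<Rightarrow> bool" where
  "injective_family K X \<longleftrightarrow>
     (\<forall>T :: complex ^ 'n ^ 'n. self_adjoint_op K T \<and> (\<forall>k. hinner (T *v X k) (X k) = 0)
        \<longrightarrow> T = 0)"

definition frame_dist :: "('m::finite \<Rightarrow> complex ^ 'n) \<Rightarrow> ('m \<Rightarrow> complex ^ 'n) \<Rightarrow> real" where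
  "frame_dist X Y = sqrt (\<Sum>k\<in>UNIV. (norm (X k - Y k))\<^sup>2)"

end

theory Submission imports Defs begin
lemma closed_S:
  assumes "K = \<real> \<or> K = UNIV"
  shows "closed {T :: complex^'n^'n. self_adjoint_op K T \<and> norm T = 1}"
proof (cases "K = \<real>")
  case True
  have eq: "{T :: complex^'n^'n. self_adjoint_op K T \<and> norm T = 1} =
     {T. \<forall>i j. Im (T $ i $ j) = 0 \<and> T $ i $ j = cnj (T $ j $ i)} \<inter> {T. norm T = 1}"
    unfolding self_adjoint_op_def True complex_is_Real_iff by blast
  have c1: "closed {T :: complex^'n^'n. \<forall>i j. Im (T $ i $ j) = 0 \<and> T $ i $ j = cnj (T $ j $ i)}"
    apply (intro closed_Collect_all closed_Collect_conj closed_Collect_eq)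
    apply (intro continuous_intros continuous_on_component)+
    done
  have c2: "closed {T :: complex^'n^'n. norm T = 1}"
    by (rule closed_Collect_eq) (intro continuous_intros)+
  show ?thesis unfolding eq using c1 c2 by (rule closed_Int)
next
  case False
  then have K: "K = UNIV" using assms by blast
  have eq: "{T :: complex^'n^'n. self_adjoint_op K T \<and> norm T = 1} =
     {T. \<forall>i j. T $ i $ j = cnj (T $ j $ i)} \<inter> {T. norm T = 1}"
    unfolding self_adjoint_op_def K by blast
  have c1: "closed {T :: complex^'n^'n. \<forall>i j. T $ i $ j = cnj (T $ j $ i)}"
    apply (intro closed_Collect_all closed_Collect_eq)
    apply (intro continuous_intros continuous_on_component)+
    done
  have c2: "closed {T :: complex^'n^'n. norm T = 1}"
    by (rule closed_Collect_eq) (intro continuous_intros)+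
  show ?thesis unfolding eq using c1 c2 by (rule closed_Int)
qed
lemma sa_scale:
  assumes "K = \<real> \<or> K = UNIV" "self_adjoint_op K T"
  shows "self_adjoint_op K (c *\<^sub>R T)"
  unfolding self_adjoint_op_def
proof (intro allI conjI)
  fix i j
  have a: "T $ i $ j \<in> K" "T $ i $ j = cnj (T $ j $ i)"
    using assms(2) unfolding self_adjoint_op_def by blast+
  have e: "(c *\<^sub>R T) $ i $ j = complex_of_real c * T $ i $ j" for i j
    unfolding vector_scaleR_component by (rule scaleR_conv_of_real)
  show "(c *\<^sub>R T) $ i $ j \<in> K" unfolding e using assms(1) a(1) by auto
  show "(c *\<^sub>R T) $ i $ j = cnj ((c *\<^sub>R T) $ j $ i)" unfolding e
    by (subst a(2)) simp
qed

lemma hin_scale: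
  "hinner ((c *\<^sub>R T) *v v) v = complex_of_real c * hinner (T *v v) (v::complex^'n)"
proof -
  have e: "(c *\<^sub>R T) $ i $ j = complex_of_real c * T $ i $ j" for i j
    unfolding vector_scaleR_component by (rule scaleR_conv_of_real)
  show ?thesis unfolding hinner_def matrix_vector_mult_def e
    by (simp add: sum_distrib_left sum_distrib_right mult.assoc)
qed

lemma cont_hin:
  "continuous_on UNIV (\<lambda>p :: (complex^'n^'n) \<times> ((complex^'n)^'m::finite).
      hinner (fst p *v (snd p $ k)) (snd p $ k))"
  unfolding hinner_def matrix_vector_mult_def
  by (intro continuous_intros continuous_on_component)

lemma closed_Z:
  "closed {p :: (complex^'n^'n) \<times> ((complex^'n)^'m::finite).
      \<forall>k. hinner (fst p *v (snd p $ k)) (snd p $ k) = 0}"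
  apply (rule closed_Collect_all)
  apply (rule closed_Collect_eq)
  apply (rule cont_hin)
  apply (rule continuous_on_const)
  done

theorem mainTheorem6:
  fixes K :: "complex set"
  assumes "K = \<real> \<or> K = UNIV"
    and "is_frame K (X :: 'm::finite \<Rightarrow> complex ^ 'n)"
    and "injective_family K X"
  shows "\<exists>e>0. \<forall>Y :: 'm \<Rightarrow> complex ^ 'n.
           is_frame K Y \<and> frame_dist X Y < e \<longrightarrow> injective_family K Y"
proof -
  define S where "S = {T :: complex^'n^'n. self_adjoint_op K T \<and> norm T = 1}"
  have "closed S" unfolding S_def using closed_S[OF assms(1)] .
  moreover have "bounded S" unfolding S_def bounded_iff by auto
  ultimately have cS: "compact S" using compact_eq_bounded_closed by blast
  define Z where "Z = {p :: (complex^'n^'n) \<times> ((complex^'n)^'m).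
      \<forall>k. hinner (fst p *v (snd p $ k)) (snd p $ k) = 0}"
  define Zc where "Zc = {y. \<exists>T. T \<in> S \<and> (T, y) \<in> Z}"
  have "closed Zc" unfolding Zc_def Z_def
    by (rule closed_compact_projection[OF cS closed_Z])
  define x0 where "x0 = (\<chi> k. X k)"
  have "x0 \<notin> Zc"
  proof
    assume "x0 \<in> Zc"
    then obtain T where T: "self_adjoint_op K T" "norm T = 1"
      "\<forall>k. hinner (T *v X k) (X k) = 0"
      unfolding Zc_def Z_def S_def x0_def by auto
    then have "T = 0" using assms(3) unfolding injective_family_def by blast
    with T(2) show False by simp
  qed
  moreover have "open (- Zc)" using \<open>closed Zc\<close> by (simp add: open_Compl)
  ultimately obtain e where e: "e > 0" "ball x0 e \<subseteq> - Zc"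
    using open_contains_ball by blast
  have fd: "frame_dist X Y = dist x0 (\<chi> k. Y k)" for Y :: "'m \<Rightarrow> complex^'n"
    unfolding frame_dist_def dist_norm norm_vec_def L2_set_def x0_def by simp
  show ?thesis
  proof (intro exI[of _ e] conjI allI impI e(1))
    fix Y :: "'m \<Rightarrow> complex^'n"
    assume "is_frame K Y \<and> frame_dist X Y < e"
    then have "(\<chi> k. Y k) \<notin> Zc" using e(2) fd by auto
    show "injective_family K Y"
      unfolding injective_family_def
    proof (intro allI impI)
      fix T :: "complex^'n^'n"
      assume H: "self_adjoint_op K T \<and> (\<forall>k. hinner (T *v Y k) (Y k) = 0)"
      show "T = 0"
      proof (rule ccontr)
        assume "T \<noteq> 0"
        define T' where "T' = (1 / norm T) *\<^sub>R T"
        have "T' \<in> S" unfolding S_def T'_def using sa_scale[OF assms(1)] H \<open>T \<noteq> 0\<close> by auto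
        moreover have "\<forall>k. hinner (T' *v Y k) (Y k) = 0"
          unfolding T'_def hin_scale using H by simp
        ultimately have "(\<chi> k. Y k) \<in> Zc" unfolding Zc_def Z_def by auto
        with \<open>(\<chi> k. Y k) \<notin> Zc\<close> show False by blast
      qed
    qed
  qed
qed
end
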